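(* Let $f(x)=\ln(e-x)$ for $0\le x\le e-1$ and $f(x)=0$ for $x>e-1$. Then $f$ is a standard allocation rule and the large-market approximation ratio of the mechanism $\mathrm{Truthful}(f)$ equals $1-1/e$. Moreover, for every standard allocation rule $g$, the large-market approximation ratio of $\mathrm{Truthful}(g)$ is at most $1-1/e$. (Thus $f$ is an optimal choice of standard allocation rule for this family of mechanisms.)
   Context: Setting (budgeted procurement with divisible items): a buyer with budget $B>0$ faces a finite set $S=\{1,\dots,n\}$ of sellers; seller $i$ owns one item that gives the buyer utility $u_i>0$ and has a private cost $c_i\ge 0$. Items are divisible: buying a fraction $x_i\in[0,1]$ of item $i$ costs seller $i$ the amount $x_ic_i$ and gives the buyer utility $x_iu_i$. $U^\star$ denotes the optimal fractional knapsack value $\max\{\sum_i u_i\alpha_i:\alpha\in[0,1]^n,\ \sum_i c_i\alpha_i\le B\}$. Let $c_{\max}=\max_i c_i$ and call $\theta=c_{\max}/B$ the largeness ratio of the instance. A standard allocation rule is a non-increasing function $f:[0,\infty)\to[0,1]$ with $f(0)=1$ and $f(e-1)=0$ (hence $f(x)=0$ for $x\ge e-1$). For $r>0$ let $f_r(x)=f(x/r)$, let $Q_r(x)=x f_r(x)+\int_x^\infty f_r(y)\,dy$ for $x\ge 0$, and let $P_{i,r}(x)=u_iQ_r(x/u_i)$. Mechanism $\mathrm{EnvyFree}(f)$ on cost vector $c$: the stopping rate $r^\star(c)$ is the value at which, starting from $r=\infty$ and decreasing $r$, the total payment $\sum_{i\in S}P_{i,r}(c_i)$ (a nondecreasing function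 of $r$) first becomes equal to $B$; it buys $f_{r^\star}(c_i/u_i)$ of item $i$ and pays $P_{i,r^\star}(c_i)$ to seller $i$. Mechanism $\mathrm{Truthful}(f)$ on cost vector $c$: for each seller $i$, let $r_i$ be the stopping rate of $\mathrm{EnvyFree}(f)$ on the cost vector obtained from $c$ by replacing $c_i$ with $0$ (all other costs unchanged); buy $f_{r_i}(c_i/u_i)$ of item $i$ and pay $P_{i,r_i}(c_i)$ to seller $i$. Large-market approximation ratio of a mechanism $M$ (evaluated with true costs): $\lim_{\theta_0\to 0}\ \inf_I \mathcal U_M(I)/U^\star(I)$, where the infimum is over instances $I$ with largeness ratio at most $\theta_0$ and $\mathcal U_M(I)=\sum_i u_ix_i$ is the buyer's utility from $M$'s allocation. *)

theory Defs
  imports "HOL-Analysis.Analysis"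
begin

definition standard_alloc :: "(real \<Rightarrow> real) \<Rightarrow> bool" where
  "standard_alloc f \<longleftrightarrow>
     (\<forall>x y. 0 \<le> x \<longrightarrow> x \<le> y \<longrightarrow> f y \<le> f x) \<and>
     (\<forall>x. 0 \<le> x \<longrightarrow> 0 \<le> f x \<and> f x \<le> 1) \<and>
     f 0 = 1 \<and> f (exp 1 - 1) = 0"

definition ln_rule :: "real \<Rightarrow> real" where
  "ln_rule x = (if 0 \<le> x \<and> x \<le> exp 1 - 1 then ln (exp 1 - x) else 0)"

definition scaled :: "(real \<Rightarrow> real) \<Rightarrow> real \<Rightarrow> real \<Rightarrow> real" where
  "scaled f r x = f (x / r)"

definition Qr :: "(real \<Rightarrow> real) \<Rightarrow> real \<Rightarrow> real \<Rightarrow> real" where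
  "Qr f r x = x * scaled f r x + integral {x..} (scaled f r)"

definition Pay :: "(real \<Rightarrow> real) \<Rightarrow> real \<Rightarrow> real \<Rightarrow> real \<Rightarrow> real" where
  "Pay f r ui x = ui * Qr f r (x / ui)"

definition total_pay :: "(real \<Rightarrow> real) \<Rightarrow> nat set \<Rightarrow> (nat \<Rightarrow> real) \<Rightarrow> (nat \<Rightarrow> real) \<Rightarrow> real \<Rightarrow> real" where
  "total_pay f S u c r = (\<Sum>i\<in>S. Pay f r (u i) (c i))"

text \<open>Stopping rate of EnvyFree(f): decreasing r from infinity, the first value at which the
  (nondecreasing in r) total payment reaches B, i.e. the supremum of the rates r > 0 whose total
  payment is at most B. Convention (degenerate case only, when this set is unbounded, which
  happens only if f vanishes on (0,inf)): rate 1.\<close>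
definition stop_rate :: "(real \<Rightarrow> real) \<Rightarrow> nat set \<Rightarrow> (nat \<Rightarrow> real) \<Rightarrow> (nat \<Rightarrow> real) \<Rightarrow> real \<Rightarrow> real" where
  "stop_rate f S u c B =
     (let R = {r. 0 < r \<and> total_pay f S u c r \<le> B} in if bdd_above R then Sup R else 1)"

definition truthful_alloc :: "(real \<Rightarrow> real) \<Rightarrow> nat set \<Rightarrow> (nat \<Rightarrow> real) \<Rightarrow> (nat \<Rightarrow> real) \<Rightarrow> real \<Rightarrow> nat \<Rightarrow> real" where
  "truthful_alloc f S u c B i = scaled f (stop_rate f S u (c(i := 0)) B) (c i / u i)"

definition truthful_pay :: "(real \<Rightarrow> real) \<Rightarrow> nat set \<Rightarrow> (nat \<Rightarrow> real) \<Rightarrow> (nat \<Rightarrow> real) \<Rightarrow> real \<Rightarrow> nat \<Rightarrow> real" where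
  "truthful_pay f S u c B i = Pay f (stop_rate f S u (c(i := 0)) B) (u i) (c i)"

definition truthful_util :: "(real \<Rightarrow> real) \<Rightarrow> nat set \<Rightarrow> (nat \<Rightarrow> real) \<Rightarrow> (nat \<Rightarrow> real) \<Rightarrow> real \<Rightarrow> real" where
  "truthful_util f S u c B = (\<Sum>i\<in>S. u i * truthful_alloc f S u c B i)"

definition opt_util :: "nat set \<Rightarrow> (nat \<Rightarrow> real) \<Rightarrow> (nat \<Rightarrow> real) \<Rightarrow> real \<Rightarrow> real" where
  "opt_util S u c B = Sup {(\<Sum>i\<in>S. u i * a i) | a.
       (\<forall>i\<in>S. 0 \<le> a i \<and> a i \<le> 1) \<and> (\<Sum>i\<in>S. c i * a i) \<le> B}"

definition valid_instance :: "nat set \<Rightarrow> (nat \<Rightarrow> real) \<Rightarrow> (nat \<Rightarrow> real) \<Rightarrow> real \<Rightarrow> bool" where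
  "valid_instance S u c B \<longleftrightarrow> finite S \<and> S \<noteq> {} \<and> 0 < B \<and> (\<forall>i\<in>S. 0 < u i \<and> 0 \<le> c i)"

definition largeness :: "nat set \<Rightarrow> (nat \<Rightarrow> real) \<Rightarrow> real \<Rightarrow> real" where
  "largeness S c B = Max (c ` S) / B"

definition worst_ratio :: "(real \<Rightarrow> real) \<Rightarrow> real \<Rightarrow> real" where
  "worst_ratio f \<theta>0 = Inf {truthful_util f S u c B / opt_util S u c B | S u c B.
       valid_instance S u c B \<and> largeness S c B \<le> \<theta>0}"

definition lm_ratio_is :: "(real \<Rightarrow> real) \<Rightarrow> real \<Rightarrow> bool" where
  "lm_ratio_is f L \<longleftrightarrow> (worst_ratio f \<longlongrightarrow> L) (at_right 0)"

end

theory Submission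
  imports Defs "HOL-Analysis.Analysis"
begin


lemma e_bounds: "2.7 < exp (1::real)" "exp (1::real) < 2.72"
  using e_approx_32 by (auto simp: abs_le_iff abs_if split: if_splits)

lemma ln_ge_1_minus_inv: "0 < x \<Longrightarrow> 1 - 1/x \<le> ln (x::real)"
  using ln_le_minus_one[of "1/x"] by (simp add: ln_div)

definition mE :: "real \<Rightarrow> real" where "mE y = min y (exp 1 - 1)"
definition Qln :: "real \<Rightarrow> real" where
  "Qln y = 1 + mE y - exp 1 + exp 1 * ln (exp 1 - mE y)"
definition Gln :: "real \<Rightarrow> real" where
  "Gln y = (exp 1 - mE y) * ln (exp 1 - mE y) - (exp 1 - mE y) + 1"

lemma ln_rule_alt: "0 \<le> y \<Longrightarrow> ln_rule y = ln (exp 1 - mE y)"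
  by (auto simp: ln_rule_def mE_def min_def)

lemma Gln_int:
  assumes a: "0 \<le> a" and r: "0 < r"
  shows "((\<lambda>t. ln_rule (t/r)) has_integral (r * Gln (a/r))) {a..}"
proof (cases "a \<le> (exp 1 - 1) * r")
  case True
  let ?b = "(exp 1 - 1) * r"
  let ?F = "\<lambda>t. - r * ((exp 1 - t/r) * ln (exp 1 - t/r) - (exp 1 - t/r))"
  have e1: "1 < exp (1::real)" by simp
  have der: "(?F has_vector_derivative ln (exp 1 - t/r)) (at t within {a..?b})"
    if "t \<in> {a..?b}" for t
  proof -
    have "t/r \<le> exp 1 - 1" using that r by (auto simp: field_simps)
    then have pos: "0 < exp 1 - t/r" by simp
    have "(?F has_real_derivative (- r * ((-(1/r)) * ln (exp 1 - t/r) + (exp 1 - t/r) * ((-(1/r)) / (exp 1 - t/r)) - (-(1/r))))) (at t within {a..?b})"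
      using pos by (auto intro!: derivative_eq_intros)
    moreover have "- r * ((-(1/r)) * ln (exp 1 - t/r) + (exp 1 - t/r) * ((-(1/r)) / (exp 1 - t/r)) - (-(1/r))) = ln (exp 1 - t/r)"
      using r pos by (simp add: field_simps)
    ultimately show ?thesis by (simp add: has_real_derivative_iff_has_vector_derivative)
  qed
  have "((\<lambda>t. ln (exp 1 - t/r)) has_integral (?F ?b - ?F a)) {a..?b}"
    by (rule fundamental_theorem_of_calculus[OF True der])
  moreover have "?F ?b - ?F a = r * Gln (a/r)"
    using True r by (simp add: Gln_def mE_def field_simps min_def)
  ultimately have h1: "((\<lambda>t. ln (exp 1 - t/r)) has_integral r * Gln (a/r)) {a..?b}" by simp
  have h2: "((\<lambda>t. ln_rule (t/r)) has_integral r * Gln (a/r)) {a..?b}"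
    apply (rule has_integral_eq[OF _ h1])
    using a r by (auto simp: ln_rule_def field_simps)
  let ?h = "\<lambda>t. if t \<in> {a..?b} then ln_rule (t/r) else 0"
  have h3: "(?h has_integral r * Gln (a/r)) {a..?b}"
    by (rule has_integral_eq[OF _ h2]) auto
  have h4: "(?h has_integral r * Gln (a/r)) {a..}"
    by (rule has_integral_on_superset[OF h3]) auto
  show ?thesis
    apply (rule has_integral_eq[OF _ h4])
    using r by (auto simp: ln_rule_def field_simps)
next
  case False
  have "Gln (a/r) = 0" using False r by (simp add: Gln_def mE_def min_def field_simps)
  moreover have "((\<lambda>t. ln_rule (t/r)) has_integral 0) {a..}"
    apply (rule has_integral_eq[of _ "\<lambda>t. 0"])
    using False r by (auto simp: ln_rule_def field_simps)
  ultimately show ?thesis by simp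
qed

lemma mE_props: "0 \<le> y \<Longrightarrow> 0 \<le> mE y \<and> mE y \<le> exp 1 - 1"
  by (auto simp: mE_def min_def)

lemma Qln_z: "0 \<le> y \<Longrightarrow> Qln y = 1 - (exp 1 - mE y) + exp 1 * ln (exp 1 - mE y)"
  by (simp add: Qln_def)

lemma Qln_nonneg: assumes "0 \<le> y" shows "0 \<le> Qln y"
proof -
  define z where "z = exp 1 - mE y"
  have z1: "1 \<le> z" "z \<le> exp 1" using mE_props[OF assms] by (auto simp: z_def)
  have "1 - 1/z \<le> ln z" using z1 by (intro ln_ge_1_minus_inv) auto
  then have h1: "exp 1 * (1 - 1/z) \<le> exp 1 * ln z" by (intro mult_left_mono) auto
  have h2: "z - 1 \<le> exp 1 * (1 - 1/z)"
  proof -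
    have "(z - 1) * z \<le> (z - 1) * exp 1" using z1 by (intro mult_left_mono) auto
    then show ?thesis using z1 by (simp add: field_simps mult.commute)
  qed
  show ?thesis using h1 h2 Qln_z[OF assms] unfolding z_def[symmetric] by linarith
qed

lemma Qln_le1: assumes "0 \<le> y" shows "Qln y \<le> 1"
proof -
  define z where "z = exp 1 - mE y"
  have z1: "1 \<le> z" "z \<le> exp 1" using mE_props[OF assms] by (auto simp: z_def)
  have "ln (z / exp 1) \<le> z / exp 1 - 1" using z1 by (intro ln_le_minus_one) auto
  then have "ln z - 1 \<le> z / exp 1 - 1" using z1 by (simp add: ln_div)
  then have "exp 1 * ln z \<le> z" by (simp add: field_simps)
  then show ?thesis using Qln_z[OF assms] by (simp add: z_def)
qed

lemma Qln_0: "Qln 0 = 1"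
  by (simp add: Qln_def mE_def)

lemma Qln_gap: assumes "0 \<le> y" shows "1 - Qln y \<le> y"
proof (cases "y \<le> 1")
  case False then show ?thesis using Qln_nonneg[OF assms] by simp
next
  case True
  have eb: "2.7 < exp (1::real)" using e_bounds by simp
  have m: "mE y = y" using True eb by (simp add: mE_def)
  have pos: "0 < exp 1 - y" using True eb by simp
  have "1 - 1/((exp 1 - y)/exp 1) \<le> ln ((exp 1 - y)/exp 1)"
    using pos by (intro ln_ge_1_minus_inv) auto
  then have "1 - exp 1/(exp 1 - y) \<le> ln (exp 1 - y) - 1" using pos by (simp add: ln_div)
  then have "exp 1 * (1 - exp 1/(exp 1 - y)) \<le> exp 1 * (ln (exp 1 - y) - 1)"
    by (intro mult_left_mono) auto
  then have h: "exp 1 - exp 1 * (exp 1/(exp 1 - y)) \<le> exp 1 * ln (exp 1 - y) - exp 1"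
    by (simp add: right_diff_distrib)
  have "exp 1 * (exp 1/(exp 1 - y)) \<le> exp 1 + 2 * y"
  proof -
    have "exp 1 * exp 1 \<le> (exp 1 + 2*y) * (exp 1 - y)"
    proof -
      have "0 \<le> y * (exp 1 - 2*y)" using True eb assms by (intro mult_nonneg_nonneg) auto
      then show ?thesis by (simp add: algebra_simps)
    qed
    then show ?thesis using pos by (simp add: field_simps)
  qed
  then show ?thesis using h Qln_z[OF assms] m by simp
qed

lemma dual_ln:
  assumes y: "0 \<le> y" and a: "0 \<le> \<alpha>" "\<alpha> \<le> 1"
  shows "(1 - 1/exp 1) * \<alpha> + (Qln y - y * \<alpha>) / exp 1 \<le> ln_rule y"
proof (cases "y \<le> exp 1 - 1")
  case True
  have m: "mE y = y" using True by (simp add: mE_def)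
  have lr: "ln_rule y = ln (exp 1 - y)" using True y by (simp add: ln_rule_def)
  have "(1 - 1/exp 1) * \<alpha> + (Qln y - y * \<alpha>) / exp 1 - ln_rule y = (1 + y - exp 1) * (1 - \<alpha>) / exp 1"
    by (simp add: Qln_def m lr field_simps)
  moreover have "(1 + y - exp 1) * (1 - \<alpha>) \<le> 0" using True a by (intro mult_nonpos_nonneg) auto
  ultimately show ?thesis by (smt (verit) divide_nonpos_pos exp_gt_zero)
next
  case False
  have m: "mE y = exp 1 - 1" using False by (simp add: mE_def)
  have lr: "ln_rule y = 0" using False by (simp add: ln_rule_def)
  have q: "Qln y = 0" by (simp add: Qln_def m)
  have "(1 - 1/exp 1) * \<alpha> + (Qln y - y * \<alpha>) / exp 1 = \<alpha> * (exp 1 - 1 - y) / exp 1"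
    by (simp add: q field_simps)
  moreover have "\<alpha> * (exp 1 - 1 - y) \<le> 0" using False a by (intro mult_nonneg_nonpos) auto
  ultimately show ?thesis by (simp add: lr divide_nonpos_pos)
qed

lemma Qln_le_e_ln: "0 \<le> y \<Longrightarrow> Qln y \<le> exp 1 * ln_rule y"
  using dual_ln[of y 0] by (simp add: field_simps)

lemma isCont_Qln: "isCont Qln y"
proof -
  have "isCont mE y" unfolding mE_def by (intro continuous_intros)
  moreover have "1 \<le> exp 1 - mE y" by (simp add: mE_def)
  ultimately show ?thesis unfolding Qln_def[abs_def]
    by (auto intro!: continuous_intros)
qed

lemma ln_rule_Gln: "0 \<le> y \<Longrightarrow> y * ln_rule y + Gln y = Qln y"
  by (auto simp: ln_rule_def Gln_def Qln_def mE_def min_def field_simps)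

lemma Pay_ln:
  assumes u: "0 < u" and r: "0 < r" and x: "0 \<le> x"
  shows "Pay ln_rule r u x = u * r * Qln (x / (u * r))"
proof -
  have i: "integral {x/u..} (scaled ln_rule r) = r * Gln ((x/u)/r)"
    unfolding scaled_def using Gln_int[of "x/u" r] u r x by (simp add: integral_unique)
  have "Pay ln_rule r u x = u * ((x/u) * ln_rule ((x/u)/r) + r * Gln ((x/u)/r))"
    by (simp add: Pay_def Qr_def i scaled_def)
  also have "\<dots> = u * r * ((x/(u*r)) * ln_rule (x/(u*r)) + Gln (x/(u*r)))"
    using u r by (simp add: field_simps)
  also have "\<dots> = u * r * Qln (x / (u * r))"
  proof -
    have "0 \<le> x/(u*r)" using u r x by simp
    from ln_rule_Gln[OF this] show ?thesis by simp
  qed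
  finally show ?thesis .
qed




lemma std_anti: "standard_alloc g \<Longrightarrow> 0 \<le> x \<Longrightarrow> x \<le> y \<Longrightarrow> g y \<le> g x"
  by (simp add: standard_alloc_def)
lemma std_nn: "standard_alloc g \<Longrightarrow> 0 \<le> x \<Longrightarrow> 0 \<le> g x"
  by (simp add: standard_alloc_def)
lemma std_le1: "standard_alloc g \<Longrightarrow> 0 \<le> x \<Longrightarrow> g x \<le> 1"
  by (simp add: standard_alloc_def)
lemma std_0: "standard_alloc g \<Longrightarrow> g 0 = 1"
  by (simp add: standard_alloc_def)
lemma std_zero: assumes "standard_alloc g" "exp 1 - 1 \<le> x" shows "g x = 0"
proof -
  have "0 \<le> exp (1::real) - 1" by simp
  then have "g x \<le> g (exp 1 - 1)" using assms std_anti by blast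
  moreover have "g (exp 1 - 1) = 0" using assms by (simp add: standard_alloc_def)
  moreover have "0 \<le> g x" using assms std_nn[of g x] \<open>0 \<le> exp 1 - 1\<close> by linarith
  ultimately show ?thesis by linarith
qed

definition adm :: "(real \<Rightarrow> real) \<Rightarrow> real \<Rightarrow> bool" where
  "adm h M \<longleftrightarrow> 0 \<le> M \<and> (\<forall>x y. 0 \<le> x \<longrightarrow> x \<le> y \<longrightarrow> h y \<le> h x) \<and>
     (\<forall>x. 0 \<le> x \<longrightarrow> 0 \<le> h x \<and> h x \<le> 1) \<and> (\<forall>x. M \<le> x \<longrightarrow> h x = 0)"

lemma adm_scaled:
  assumes "standard_alloc g" "0 < r"
  shows "adm (scaled g r) ((exp 1 - 1) * r)"
  unfolding adm_def scaled_def
proof (intro conjI allI impI)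
  show "0 \<le> (exp 1 - 1) * r" using assms by simp
  fix x y :: real
  assume "0 \<le> x" "x \<le> y"
  moreover have "0 \<le> x / r" using \<open>0 \<le> x\<close> assms by simp
  moreover have "x / r \<le> y / r" using \<open>x \<le> y\<close> assms by (simp add: divide_right_mono)
  ultimately show "g (y / r) \<le> g (x / r)" using std_anti[OF assms(1)] by blast
next
  fix x :: real assume "0 \<le> x"
  then have "0 \<le> x / r" using assms by simp
  then show "0 \<le> g (x / r)" "g (x/r) \<le> 1" using std_nn[OF assms(1)] std_le1[OF assms(1)] by auto
next
  fix x :: real assume "(exp 1 - 1) * r \<le> x"
  then have "exp 1 - 1 \<le> x / r" using assms by (simp add: field_simps)
  then show "g (x / r) = 0" using assms std_zero by blast
qed

lemma adm_integrable_box: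
  assumes "adm h M" "0 \<le> a"
  shows "h integrable_on {a..b}"
proof -
  have "mono_on {a..b} (\<lambda>x. - h x)"
    using assms by (intro mono_onI) (auto simp: adm_def)
  then have "(\<lambda>x. - h x) integrable_on {a..b}" by (rule integrable_on_mono_on)
  then show ?thesis by (simp add: integrable_neg_iff)
qed

lemma adm_has_int:
  assumes "adm h M" "0 \<le> a"
  shows "(h has_integral (integral {a..max a M} h)) {a..}"
proof -
  let ?b = "max a M"
  have h3: "(h has_integral (integral {a..?b} h)) {a..?b}"
    by (rule integrable_integral[OF adm_integrable_box[OF assms]])
  let ?h = "\<lambda>t. if t \<in> {a..?b} then h t else 0"
  have "(?h has_integral (integral {a..?b} h)) {a..?b}"
    by (rule has_integral_eq[OF _ h3]) auto
  then have "(?h has_integral (integral {a..?b} h)) {a..}"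
    by (rule has_integral_on_superset) auto
  then show ?thesis
    by (rule has_integral_eq[rotated]) (use assms in \<open>auto simp: adm_def\<close>)
qed

lemma adm_int_eq:
  assumes "adm h M" "0 \<le> a"
  shows "h integrable_on {a..}" "integral {a..} h = integral {a..max a M} h"
  using adm_has_int[OF assms] by (rule has_integral_integrable, rule integral_unique)

lemma adm_int_nonneg:
  assumes "adm h M" "0 \<le> a"
  shows "0 \<le> integral {a..} h"
  using assms adm_int_eq[OF assms] by (intro integral_nonneg) (auto simp: adm_def)

lemma adm_int_le:
  assumes "adm h M" "0 \<le> a"
  shows "integral {a..} h \<le> M"
proof -
  have "integral {a..max a M} h \<le> integral {a..max a M} (\<lambda>_. 1::real)"
  proof (rule integral_le)
    show "h integrable_on {a..max a M}" by (rule adm_integrable_box[OF assms])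
    show "(\<lambda>_. 1::real) integrable_on {a..max a M}" using integrable_const[of "1::real" a "max a M"] by simp
    show "\<And>x. x \<in> {a..max a M} \<Longrightarrow> h x \<le> 1" using assms by (auto simp: adm_def)
  qed
  also have "\<dots> = max a M - a" by simp
  also have "\<dots> \<le> M" using assms by (auto simp: adm_def)
  finally show ?thesis using adm_int_eq[OF assms] by simp
qed

lemma adm_int_split:
  assumes "adm h M" "0 \<le> a" "a \<le> b"
  shows "(b - a) * h b + integral {b..} h \<le> integral {a..} h"
proof -
  have b0: "0 \<le> b" using assms by linarith
  have ib: "(h has_integral integral {b..} h) {b..}"
    by (rule integrable_integral[OF adm_int_eq(1)[OF assms(1) b0]])
  have iab: "(h has_integral integral {a..b} h) {a..b}"
    by (rule integrable_integral[OF adm_integrable_box[OF assms(1,2)]])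
  have "negligible ({a..b} \<inter> {b..})"
  proof -
    have "{a..b} \<inter> {b..} \<subseteq> {b}" by auto
    then show ?thesis by (rule negligible_subset[OF negligible_sing])
  qed
  then have "(h has_integral (integral {a..b} h + integral {b..} h)) ({a..b} \<union> {b..})"
    by (rule has_integral_Un[OF iab ib])
  moreover have "{a..b} \<union> {b..} = {a..}" using assms by auto
  ultimately have eq: "integral {a..} h = integral {a..b} h + integral {b..} h"
    by (simp add: integral_unique)
  have "integral {a..b} (\<lambda>_. h b) \<le> integral {a..b} h"
  proof (rule integral_le)
    show "h integrable_on {a..b}" by (rule adm_integrable_box[OF assms(1,2)])
    show "(\<lambda>_. h b) integrable_on {a..b}" using integrable_const[of "h b" a b] by simp
    show "\<And>x. x \<in> {a..b} \<Longrightarrow> h b \<le> h x" using assms by (auto simp: adm_def)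
  qed
  then show ?thesis using eq assms by simp
qed

lemma adm_int_mono:
  assumes "adm h1 M1" "adm h2 M2" "0 \<le> a" "\<And>x. a \<le> x \<Longrightarrow> h1 x \<le> h2 x"
  shows "integral {a..} h1 \<le> integral {a..} h2"
  using assms adm_int_eq(1)[OF assms(1,3)] adm_int_eq(1)[OF assms(2,3)]
  by (intro integral_le) auto




lemma Qr_unfold: "Qr g r a = a * g (a/r) + integral {a..} (scaled g r)"
  by (simp add: Qr_def scaled_def)

lemma Qr_nonneg: assumes "standard_alloc g" "0 < r" "0 \<le> a" shows "0 \<le> Qr g r a"
proof -
  have "0 \<le> g (a/r)" using assms std_nn[OF assms(1), of "a/r"] by simp
  moreover have "0 \<le> integral {a..} (scaled g r)" using adm_int_nonneg[OF adm_scaled[OF assms(1,2)] assms(3)] .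
  ultimately show ?thesis using assms by (simp add: Qr_unfold)
qed

lemma Qr_le: assumes "standard_alloc g" "0 < r" "0 \<le> a" shows "Qr g r a \<le> 2 * (exp 1 - 1) * r"
proof -
  have "a * g (a/r) \<le> (exp 1 - 1) * r"
  proof (cases "exp 1 - 1 \<le> a/r")
    case True then show ?thesis using std_zero[OF assms(1) True] assms by simp
  next
    case False
    then have "a < (exp 1 - 1) * r" using assms by (simp add: field_simps)
    moreover have "g (a/r) \<le> 1" "0 \<le> g (a/r)" using assms std_le1[OF assms(1), of "a/r"] std_nn[OF assms(1), of "a/r"] by auto
    ultimately show ?thesis using assms by (smt (verit) mult_left_le)
  qed
  moreover have "integral {a..} (scaled g r) \<le> (exp 1 - 1) * r"
    using adm_int_le[OF adm_scaled[OF assms(1,2)] assms(3)] .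
  ultimately show ?thesis by (simp add: Qr_unfold algebra_simps)
qed

lemma Qr_anti: assumes "standard_alloc g" "0 < r" "0 \<le> a" shows "Qr g r a \<le> Qr g r 0"
proof -
  have "(a - 0) * scaled g r a + integral {a..} (scaled g r) \<le> integral {0..} (scaled g r)"
    by (rule adm_int_split[OF adm_scaled[OF assms(1,2)]]) (use assms in auto)
  then show ?thesis by (simp add: Qr_unfold scaled_def)
qed

lemma Qr_mono_r: assumes "standard_alloc g" "1 \<le> r" "0 \<le> a" shows "Qr g 1 a \<le> Qr g r a"
proof -
  have r: "0 < r" using assms by simp
  have "a / r \<le> a" using assms by (simp add: divide_le_eq mult_le_cancel_left1 field_simps)
  then have "g a \<le> g (a / r)" using std_anti[OF assms(1)] assms r by simp
  then have 1: "a * g (a/1) \<le> a * g (a/r)" using assms by (simp add: mult_left_mono)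
  have 2: "integral {a..} (scaled g 1) \<le> integral {a..} (scaled g r)"
  proof (rule adm_int_mono[OF adm_scaled[OF assms(1)] adm_scaled[OF assms(1) r] assms(3)])
    show "0 < (1::real)" by simp
    fix x assume "a \<le> x"
    then have x: "0 \<le> x" using assms by simp
    then have "x / r \<le> x" using assms by (simp add: divide_le_eq) (metis mult_le_cancel_left1 mult.commute linorder_not_le order_trans x)
    then show "scaled g 1 x \<le> scaled g r x" using std_anti[OF assms(1)] x r by (simp add: scaled_def)
  qed
  show ?thesis using 1 2 by (simp add: Qr_unfold)
qed

lemma Pay_nonneg: "standard_alloc g \<Longrightarrow> 0 < r \<Longrightarrow> 0 < u \<Longrightarrow> 0 \<le> x \<Longrightarrow> 0 \<le> Pay g r u x"
  unfolding Pay_def by (intro mult_nonneg_nonneg Qr_nonneg) auto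

lemma Pay_le: "standard_alloc g \<Longrightarrow> 0 < r \<Longrightarrow> 0 < u \<Longrightarrow> 0 \<le> x \<Longrightarrow> Pay g r u x \<le> u * (2 * (exp 1 - 1) * r)"
  unfolding Pay_def by (intro mult_left_mono Qr_le) auto

lemma Pay_anti: "standard_alloc g \<Longrightarrow> 0 < r \<Longrightarrow> 0 < u \<Longrightarrow> 0 \<le> x \<Longrightarrow> Pay g r u x \<le> Pay g r u 0"
  unfolding Pay_def using Qr_anti[of g r "x/u"] by (intro mult_left_mono) auto

lemma Pay_mono_r: "standard_alloc g \<Longrightarrow> 1 \<le> r \<Longrightarrow> 0 < u \<Longrightarrow> 0 \<le> x \<Longrightarrow> Pay g 1 u x \<le> Pay g r u x"
  unfolding Pay_def using Qr_mono_r[of g r "x/u"] by (intro mult_left_mono) auto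

lemma tp_le:
  assumes "standard_alloc g" "\<forall>i\<in>S. 0 < u i \<and> 0 \<le> c i" "0 < r"
  shows "total_pay g S u c r \<le> 2 * (exp 1 - 1) * r * sum u S"
proof -
  have "total_pay g S u c r \<le> (\<Sum>i\<in>S. u i * (2 * (exp 1 - 1) * r))"
    unfolding total_pay_def using assms by (intro sum_mono Pay_le) auto
  also have "\<dots> = 2 * (exp 1 - 1) * r * sum u S" by (simp add: sum_distrib_right mult.commute)
  finally show ?thesis .
qed

lemma tp_nonneg:
  assumes "standard_alloc g" "\<forall>i\<in>S. 0 < u i \<and> 0 \<le> c i" "0 < r"
  shows "0 \<le> total_pay g S u c r"
  unfolding total_pay_def using assms by (intro sum_nonneg Pay_nonneg) auto

lemma stop_R_nonempty:
  assumes "standard_alloc g" "\<forall>i\<in>S. 0 < u i \<and> 0 \<le> c i" "0 < B"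
  obtains r0 where "0 < r0" "total_pay g S u c r0 \<le> B"
proof -
  have su: "0 \<le> sum u S" using assms by (intro sum_nonneg) auto
  define r0 where "r0 = B / (2 * (exp 1 - 1) * sum u S + 1)"
  have e1: "1 < exp (1::real)" by simp
  have d: "0 < 2 * (exp 1 - 1) * sum u S + 1" using su e1 by (smt (verit) mult_nonneg_nonneg)
  have r0: "0 < r0" using assms d by (simp add: r0_def)
  have "total_pay g S u c r0 \<le> 2 * (exp 1 - 1) * r0 * sum u S" by (rule tp_le[OF assms(1,2) r0])
  also have "\<dots> \<le> r0 * (2 * (exp 1 - 1) * sum u S + 1)" using r0 by (simp add: algebra_simps)
  also have "\<dots> = B" using d by (simp add: r0_def)
  finally show ?thesis using that r0 by blast
qed

lemma stop_rate_pos: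
  assumes "standard_alloc g" "\<forall>i\<in>S. 0 < u i \<and> 0 \<le> c i" "0 < B"
  shows "0 < stop_rate g S u c B"
proof -
  obtain r0 where r0: "0 < r0" "total_pay g S u c r0 \<le> B" using stop_R_nonempty[OF assms] by blast
  let ?R = "{r. 0 < r \<and> total_pay g S u c r \<le> B}"
  show ?thesis
  proof (cases "bdd_above ?R")
    case True
    have "r0 \<le> Sup ?R" using r0 True by (intro cSup_upper) auto
    then show ?thesis using True r0 by (simp add: stop_rate_def Let_def)
  next
    case False then show ?thesis by (simp add: stop_rate_def Let_def)
  qed
qed

lemma stop_rate_le1:
  assumes "standard_alloc g" "\<forall>i\<in>S. 0 < u i \<and> 0 \<le> c i" "0 < B"
    and big: "\<And>r. 1 \<le> r \<Longrightarrow> B < total_pay g S u c r"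
  shows "stop_rate g S u c B \<le> 1"
proof -
  obtain r0 where r0: "0 < r0" "total_pay g S u c r0 \<le> B" using stop_R_nonempty[OF assms(1-3)] by blast
  let ?R = "{r. 0 < r \<and> total_pay g S u c r \<le> B}"
  have sub: "\<And>r. r \<in> ?R \<Longrightarrow> r \<le> 1" using big by (metis (mono_tags) linorder_not_le mem_Collect_eq nless_le not_less_iff_gr_or_eq)
  then have "bdd_above ?R" by (intro bdd_aboveI[of _ 1]) blast
  moreover have "Sup ?R \<le> 1" using r0 sub by (intro cSup_least) auto
  ultimately show ?thesis by (simp add: stop_rate_def Let_def)
qed

lemma truthful_util_nonneg:
  assumes "standard_alloc g" "valid_instance S u c B"
  shows "0 \<le> truthful_util g S u c B"
  unfolding truthful_util_def truthful_alloc_def scaled_def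
proof (intro sum_nonneg mult_nonneg_nonneg)
  fix i assume i: "i \<in> S"
  have v: "\<forall>j\<in>S. 0 < u j \<and> 0 \<le> (c(i:=0)) j" "0 < B" using assms(2) by (auto simp: valid_instance_def)
  have "0 < stop_rate g S u (c(i := 0)) B" by (rule stop_rate_pos[OF assms(1) v])
  moreover have "0 \<le> c i / u i" using i assms(2) by (auto simp: valid_instance_def)
  ultimately show "0 \<le> g (c i / u i / stop_rate g S u (c(i := 0)) B)" using std_nn[OF assms(1)] by (simp del: divide_divide_eq_left)
  show "0 \<le> u i" using i assms(2) by (auto simp: valid_instance_def less_imp_le)
qed

definition feas :: "nat set \<Rightarrow> (nat \<Rightarrow> real) \<Rightarrow> real \<Rightarrow> (nat \<Rightarrow> real) \<Rightarrow> bool" where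
  "feas S c B a \<longleftrightarrow> (\<forall>i\<in>S. 0 \<le> a i \<and> a i \<le> 1) \<and> (\<Sum>i\<in>S. c i * a i) \<le> B"

lemma opt_set_eq: "{(\<Sum>i\<in>S. u i * a i) | a. (\<forall>i\<in>S. 0 \<le> a i \<and> a i \<le> 1) \<and> (\<Sum>i\<in>S. c i * a i) \<le> B}
   = (\<lambda>a. \<Sum>i\<in>S. u i * a i) ` {a. feas S c B a}"
  by (auto simp: feas_def)

lemma opt_ge:
  assumes "valid_instance S u c B" "feas S c B a"
  shows "(\<Sum>i\<in>S. u i * a i) \<le> opt_util S u c B"
proof -
  have "bdd_above ((\<lambda>a. \<Sum>i\<in>S. u i * a i) ` {a. feas S c B a})"
  proof (rule bdd_aboveI)
    fix x assume "x \<in> (\<lambda>a. \<Sum>i\<in>S. u i * a i) ` {a. feas S c B a}"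
    then obtain b where b: "feas S c B b" "x = (\<Sum>i\<in>S. u i * b i)" by auto
    have "(\<Sum>i\<in>S. u i * b i) \<le> (\<Sum>i\<in>S. u i)"
      using b assms(1) by (intro sum_mono) (auto simp: feas_def valid_instance_def intro: mult_left_le)
    then show "x \<le> sum u S" using b by simp
  qed
  then show ?thesis unfolding opt_util_def opt_set_eq using assms(2) by (intro cSup_upper) auto
qed

lemma opt_le:
  assumes "\<And>a. feas S c B a \<Longrightarrow> (\<Sum>i\<in>S. u i * a i) \<le> X" "0 \<le> B"
  shows "opt_util S u c B \<le> X"
proof -
  have "feas S c B (\<lambda>_. 0)" using assms by (simp add: feas_def)
  then show ?thesis unfolding opt_util_def opt_set_eq using assms by (intro cSup_least) auto
qed

lemma opt_pos:
  assumes "valid_instance S u c B"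
  shows "0 < opt_util S u c B"
proof -
  have v: "finite S" "S \<noteq> {}" "0 < B" "\<forall>i\<in>S. 0 < u i \<and> 0 \<le> c i" using assms by (auto simp: valid_instance_def)
  have sc: "0 \<le> sum c S" using v by (intro sum_nonneg) auto
  define t where "t = B / (B + sum c S)"
  have t: "0 < t" "t \<le> 1" using v sc by (auto simp: t_def)
  have "(\<Sum>i\<in>S. c i * t) = t * sum c S" by (simp add: sum_distrib_left mult.commute)
  also have "\<dots> \<le> B" using v sc by (simp add: t_def field_simps)
  finally have "feas S c B (\<lambda>_. t)" using t by (simp add: feas_def)
  then have "(\<Sum>i\<in>S. u i * t) \<le> opt_util S u c B" by (rule opt_ge[OF assms])
  moreover have "0 < (\<Sum>i\<in>S. u i * t)" using v t by (intro sum_pos) auto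
  ultimately show ?thesis by simp
qed

lemma ratio_nonneg:
  assumes "standard_alloc g" "valid_instance S u c B"
  shows "0 \<le> truthful_util g S u c B / opt_util S u c B"
  using truthful_util_nonneg[OF assms] opt_pos[OF assms(2)] by simp




definition Wset :: "(real \<Rightarrow> real) \<Rightarrow> real \<Rightarrow> real set" where
  "Wset f \<theta>0 = {truthful_util f S u c B / opt_util S u c B | S u c B.
       valid_instance S u c B \<and> largeness S c B \<le> \<theta>0}"

lemma worst_Wset: "worst_ratio f \<theta> = Inf (Wset f \<theta>)"
  by (simp add: worst_ratio_def Wset_def)

lemma Wset_bdd: "standard_alloc g \<Longrightarrow> bdd_below (Wset g \<theta>)"
  unfolding Wset_def by (rule bdd_belowI[of _ 0]) (auto intro: ratio_nonneg)

lemma zero_inst: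
  assumes "standard_alloc g" "0 \<le> \<theta>"
  shows "1 \<in> Wset g \<theta>"
proof -
  let ?S = "{0::nat}" and ?u = "\<lambda>_::nat. 1::real" and ?c = "\<lambda>_::nat. 0::real" and ?B = "1::real"
  have v: "valid_instance ?S ?u ?c ?B" by (simp add: valid_instance_def)
  have l: "largeness ?S ?c ?B \<le> \<theta>" using assms by (simp add: largeness_def)
  have tu: "truthful_util g ?S ?u ?c ?B = 1"
    using std_0[OF assms(1)] by (simp add: truthful_util_def truthful_alloc_def scaled_def)
  have o1: "opt_util ?S ?u ?c ?B \<le> 1"
    by (rule opt_le) (auto simp: feas_def)
  have o2: "1 \<le> opt_util ?S ?u ?c ?B"
    using opt_ge[OF v, of "\<lambda>_. 1"] by (simp add: feas_def)
  have "truthful_util g ?S ?u ?c ?B / opt_util ?S ?u ?c ?B = 1" using tu o1 o2 by simp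
  then show ?thesis unfolding Wset_def using v l by (smt (verit, best) mem_Collect_eq)
qed

lemma worst_le1: "standard_alloc g \<Longrightarrow> 0 \<le> \<theta> \<Longrightarrow> worst_ratio g \<theta> \<le> 1"
  unfolding worst_Wset by (rule cInf_lower[OF zero_inst Wset_bdd])

lemma worst_nonneg: "standard_alloc g \<Longrightarrow> 0 \<le> \<theta> \<Longrightarrow> 0 \<le> worst_ratio g \<theta>"
  unfolding worst_Wset
  by (rule cInf_greatest) (use zero_inst in blast, auto simp: Wset_def intro: ratio_nonneg)

lemma worst_anti: "standard_alloc g \<Longrightarrow> 0 \<le> \<theta>1 \<Longrightarrow> \<theta>1 \<le> \<theta>2 \<Longrightarrow> worst_ratio g \<theta>2 \<le> worst_ratio g \<theta>1"
  unfolding worst_Wset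
  by (rule cInf_superset_mono) (use zero_inst in blast, rule Wset_bdd, auto simp: Wset_def, fastforce)

lemma worst_le_elem:
  assumes "standard_alloc g" "valid_instance S u c B" "largeness S c B \<le> \<theta>"
  shows "worst_ratio g \<theta> \<le> truthful_util g S u c B / opt_util S u c B"
  unfolding worst_Wset
  by (rule cInf_lower[OF _ Wset_bdd[OF assms(1)]]) (use assms in \<open>auto simp: Wset_def\<close>)

lemma worst_limit:
  assumes "standard_alloc g"
  defines "L \<equiv> Sup (worst_ratio g ` {0<..})"
  shows "lm_ratio_is g L" "\<And>\<theta>. 0 < \<theta> \<Longrightarrow> worst_ratio g \<theta> \<le> L"
proof -
  have ne: "worst_ratio g ` {0<..} \<noteq> {}" by auto
  have bdd: "bdd_above (worst_ratio g ` {0<..})"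
    by (rule bdd_aboveI[of _ 1]) (use worst_le1[OF assms(1)] in auto)
  show le: "\<And>\<theta>. 0 < \<theta> \<Longrightarrow> worst_ratio g \<theta> \<le> L"
    unfolding L_def by (rule cSup_upper[OF _ bdd]) auto
  show "lm_ratio_is g L" unfolding lm_ratio_is_def
  proof (rule order_tendstoI)
    fix a assume "a < L"
    then obtain \<theta>1 where t1: "0 < \<theta>1" "a < worst_ratio g \<theta>1"
      using less_cSup_iff[OF ne bdd] unfolding L_def by auto
    show "\<forall>\<^sub>F x in at_right 0. a < worst_ratio g x"
      unfolding eventually_at_right_field
    proof (intro exI[of _ \<theta>1] conjI allI impI)
      fix y :: real assume "0 < y" "y < \<theta>1"
      then have "worst_ratio g \<theta>1 \<le> worst_ratio g y" by (intro worst_anti[OF assms(1)]) auto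
      then show "a < worst_ratio g y" using t1 by simp
    qed (use t1 in auto)
  next
    fix a assume "L < a"
    show "\<forall>\<^sub>F x in at_right 0. worst_ratio g x < a"
      using eventually_at_right_less[of "0::real"]
      by (rule eventually_mono) (use le \<open>L < a\<close> in force)
  qed
qed




lemma std_ln: "standard_alloc ln_rule"
  unfolding standard_alloc_def
proof (intro conjI allI impI)
  fix x y :: real assume xy: "0 \<le> x" "x \<le> y"
  show "ln_rule y \<le> ln_rule x"
  proof (cases "y \<le> exp 1 - 1")
    case True then show ?thesis using xy by (simp add: ln_rule_def)
  next
    case False
    then have "ln_rule y = 0" by (simp add: ln_rule_def)
    moreover have "0 \<le> ln_rule x" using xy by (auto simp: ln_rule_def)
    ultimately show ?thesis by simp
  qed
next
  fix x :: real assume x: "0 \<le> x"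
  show "0 \<le> ln_rule x" using x by (auto simp: ln_rule_def)
  show "ln_rule x \<le> 1"
  proof (cases "x \<le> exp 1 - 1")
    case True
    have "ln (exp 1 - x) \<le> ln (exp 1)" using x True by (subst ln_le_cancel_iff) auto
    then show ?thesis using True x by (simp add: ln_rule_def)
  qed (simp add: ln_rule_def)
qed (auto simp: ln_rule_def)

lemma sup_level:
  fixes f :: "real \<Rightarrow> real"
  assumes cont: "isCont f s" and bdd: "bdd_above {r. 0 < r \<and> f r \<le> B}"
    and r0: "0 < r0" "f r0 \<le> B" and s: "s = Sup {r. 0 < r \<and> f r \<le> B}"
  shows "f s = B"
proof -
  let ?R = "{r. 0 < r \<and> f r \<le> B}"
  have ne: "?R \<noteq> {}" using r0 by auto
  have sr0: "r0 \<le> s" using r0 bdd s by (auto intro: cSup_upper)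
  have ce: "\<forall>e>0. \<exists>d>0. \<forall>x'. dist x' s < d \<longrightarrow> dist (f x') (f s) < e"
    using cont by (simp add: continuous_at_eps_delta)
  show ?thesis
  proof (rule ccontr)
    assume "f s \<noteq> B"
    then consider "f s > B" | "f s < B" by linarith
    then show False
    proof cases
      case 1
      obtain d where d: "d > 0" "\<And>x'. dist x' s < d \<Longrightarrow> dist (f x') (f s) < f s - B"
        using ce 1 by (meson diff_gt_0_iff_gt)
      have "s - d < Sup ?R" using d s by simp
      then obtain r where r: "r \<in> ?R" "s - d < r" using less_cSup_iff[OF ne bdd] by auto
      have "r \<le> s" using r bdd s by (auto intro: cSup_upper)
      then have "dist r s < d" using r by (simp add: dist_real_def)
      then have "dist (f r) (f s) < f s - B" by (rule d(2))
      then show False using r by (simp add: dist_real_def abs_if split: if_splits)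
    next
      case 2
      obtain d where d: "d > 0" "\<And>x'. dist x' s < d \<Longrightarrow> dist (f x') (f s) < B - f s"
        using ce 2 by (meson diff_gt_0_iff_gt)
      have "dist (s + d/2) s < d" using d by (simp add: dist_real_def)
      then have dd: "dist (f (s + d/2)) (f s) < B - f s" by (rule d(2))
      have "f (s + d/2) \<le> B" using dd unfolding dist_real_def by linarith
      moreover have "0 < s + d/2" using d sr0 r0 by linarith
      ultimately have "s + d/2 \<in> ?R" by simp
      then have "s + d/2 \<le> Sup ?R" using bdd by (rule cSup_upper)
      then have "s + d/2 \<le> s" using s by simp
      then show False using d by simp
    qed
  qed
qed

definition tpl :: "nat set \<Rightarrow> (nat \<Rightarrow> real) \<Rightarrow> (nat \<Rightarrow> real) \<Rightarrow> real \<Rightarrow> real" where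
  "tpl S u c r = (\<Sum>i\<in>S. u i * r * Qln (c i / (u i * r)))"

lemma tpl_eq:
  assumes "\<forall>i\<in>S. 0 < u i \<and> 0 \<le> c i" "0 < r"
  shows "total_pay ln_rule S u c r = tpl S u c r"
  unfolding total_pay_def tpl_def using assms by (intro sum.cong refl Pay_ln) auto

lemma tpl_cont: assumes "0 < r" "\<forall>i\<in>S. 0 < u i" shows "isCont (tpl S u c) r"
  unfolding tpl_def[abs_def]
proof (intro continuous_intros)
  fix i assume "i \<in> S"
  have "isCont (\<lambda>r. c i / (u i * r)) r" using assms \<open>i \<in> S\<close> by (intro continuous_intros) auto
  then show "isCont (\<lambda>r. Qln (c i / (u i * r))) r" by (rule isCont_o2[OF _ isCont_Qln])
qed

lemma stop_rate_ln:
  assumes v: "valid_instance S u c B" and j: "j \<in> S"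
  shows "0 < stop_rate ln_rule S u (c(j:=0)) B \<and> tpl S u (c(j:=0)) (stop_rate ln_rule S u (c(j:=0)) B) = B"
proof -
  let ?c = "c(j:=0)"
  have vv: "finite S" "0 < B" "\<forall>i\<in>S. 0 < u i \<and> 0 \<le> ?c i" using v by (auto simp: valid_instance_def)
  have uj: "0 < u j" using v j by (auto simp: valid_instance_def)
  let ?R = "{r. 0 < r \<and> total_pay ln_rule S u ?c r \<le> B}"
  let ?R' = "{r. 0 < r \<and> tpl S u ?c r \<le> B}"
  have RR: "?R = ?R'"
  proof -
    have "\<And>r. 0 < r \<Longrightarrow> total_pay ln_rule S u ?c r = tpl S u ?c r" by (rule tpl_eq[OF vv(3)])
    then show ?thesis by (metis (no_types, lifting))
  qed
  have lowb: "u j * r \<le> tpl S u ?c r" if "0 < r" for r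
  proof -
    have "tpl S u ?c r = u j * r * Qln (?c j / (u j * r)) + (\<Sum>i\<in>S-{j}. u i * r * Qln (?c i / (u i * r)))"
      unfolding tpl_def using vv j by (simp add: sum.remove)
    moreover have "0 \<le> (\<Sum>i\<in>S-{j}. u i * r * Qln (?c i / (u i * r)))"
      using vv that by (intro sum_nonneg mult_nonneg_nonneg Qln_nonneg) (auto simp: less_imp_le)
    ultimately show ?thesis by (simp add: Qln_0)
  qed
  have bdd: "bdd_above ?R'"
  proof (rule bdd_aboveI[of _ "B / u j"])
    fix r assume "r \<in> ?R'"
    then have "u j * r \<le> B" using lowb by fastforce
    then show "r \<le> B / u j" using uj by (simp add: field_simps mult.commute)
  qed
  define r0 where "r0 = B / sum u S"
  have su: "0 < sum u S" using vv j by (intro sum_pos2[OF vv(1) j]) (auto simp: less_imp_le)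
  have r0: "0 < r0" using su vv by (simp add: r0_def)
  have "tpl S u ?c r0 \<le> (\<Sum>i\<in>S. u i * r0)"
    unfolding tpl_def using vv r0 by (intro sum_mono) (auto intro!: mult_left_le Qln_le1 Qln_nonneg mult_nonneg_nonneg simp: less_imp_le)
  also have "\<dots> = r0 * sum u S" by (simp add: sum_distrib_left mult.commute)
  also have "\<dots> = B" using su by (simp add: r0_def)
  finally have r0B: "tpl S u ?c r0 \<le> B" .
  have sr: "stop_rate ln_rule S u ?c B = Sup ?R'" using bdd RR by (simp add: stop_rate_def Let_def)
  have pos: "0 < Sup ?R'" using r0 r0B bdd by (smt (verit) cSup_upper mem_Collect_eq)
  have "tpl S u ?c (Sup ?R') = B"
    by (rule sup_level[OF tpl_cont[OF pos] bdd r0 r0B refl]) (use vv in auto)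
  then show ?thesis using sr pos by simp
qed




lemma ln_lower:
  assumes v: "valid_instance S u c B" and th: "largeness S c B \<le> \<theta>" "\<theta> < 1"
  shows "(1 - 1/exp 1) * (1 - \<theta>) \<le> truthful_util ln_rule S u c B / opt_util S u c B"
proof -
  have fin: "finite S" and ne: "S \<noteq> {}" and B: "0 < B" and uc: "\<forall>i\<in>S. 0 < u i \<and> 0 \<le> c i"
    using v by (auto simp: valid_instance_def)
  define rr where "rr i = stop_rate ln_rule S u (c(i:=0)) B" for i
  have rr: "\<And>i. i \<in> S \<Longrightarrow> 0 < rr i \<and> tpl S u (c(i:=0)) (rr i) = B"
    unfolding rr_def using stop_rate_ln[OF v] by blast
  define r' where "r' = Min (rr ` S)"
  have "r' \<in> rr ` S" unfolding r'_def using fin ne by (intro Min_in) auto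
  then obtain j0 where j0: "j0 \<in> S" "rr j0 = r'" by auto
  have r'pos: "0 < r'" using rr j0 by force
  have r'le: "\<And>i. i \<in> S \<Longrightarrow> r' \<le> rr i" unfolding r'_def using fin by auto
  have cmax: "c j0 \<le> \<theta> * B"
  proof -
    have "c j0 \<le> Max (c ` S)" using fin j0 by auto
    moreover have "Max (c ` S) / B \<le> \<theta>" using th by (simp add: largeness_def)
    ultimately show ?thesis using B by (simp add: field_simps)
  qed
  have "0 \<le> \<theta> * B" using cmax uc j0 by force
  then have th0: "0 \<le> \<theta>" using B by (simp add: zero_le_mult_iff)
  define y where "y i = c i / (u i * r')" for i
  have y0: "\<And>i. i \<in> S \<Longrightarrow> 0 \<le> y i" using uc r'pos unfolding y_def
    by (meson divide_nonneg_pos mult_pos_pos)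
  define U' where "U' = (\<Sum>i\<in>S. u i * ln_rule (y i))"
  define P' where "P' = tpl S u c r'"
  define UT where "UT = truthful_util ln_rule S u c B"
  have a: "U' \<le> UT"
    unfolding U'_def UT_def truthful_util_def truthful_alloc_def scaled_def
  proof (intro sum_mono mult_left_mono)
    fix i assume i: "i \<in> S"
    have ri: "0 < rr i" "r' \<le> rr i" using rr[OF i] r'le[OF i] by auto
    have ci: "0 \<le> c i / u i" using uc i by (auto intro: divide_nonneg_pos)
    have "c i / u i / rr i \<le> c i / u i / r'"
      using ri r'pos ci by (intro divide_left_mono) auto
    moreover have "0 \<le> c i / u i / rr i" using ci ri by (meson divide_nonneg_pos)
    ultimately have "ln_rule (c i / u i / r') \<le> ln_rule (c i / u i / rr i)"
      by (rule std_anti[OF std_ln, rotated])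
    then show "ln_rule (y i) \<le> ln_rule (c i / u i / stop_rate ln_rule S u (c(i := 0)) B)"
      by (simp add: y_def rr_def)
    show "0 \<le> u i" using uc i by (simp add: less_imp_le)
  qed
  define d where "d = u j0 * r' * (1 - Qln (y j0))"
  have bc: "B = P' + d"
  proof -
    have "B = tpl S u (c(j0:=0)) r'" using rr[OF j0(1)] j0 by simp
    also have "\<dots> = (\<Sum>i\<in>S. u i * r' * Qln (c i / (u i * r')) + (if i = j0 then d else 0))"
      unfolding tpl_def by (intro sum.cong refl) (auto simp: d_def y_def Qln_0 algebra_simps)
    also have "\<dots> = P' + d" by (simp add: sum.distrib P'_def tpl_def fin j0)
    finally show ?thesis .
  qed
  have uj0: "0 < u j0" using uc j0 by auto
  have d0: "0 \<le> d" using Qln_le1[OF y0[OF j0(1)]] uj0 r'pos unfolding d_def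
    by (intro mult_nonneg_nonneg) auto
  have d1: "d \<le> c j0"
  proof -
    have "u j0 * r' * (1 - Qln (y j0)) \<le> u j0 * r' * y j0"
      using Qln_gap[OF y0[OF j0(1)]] uj0 r'pos by (intro mult_left_mono) auto
    also have "\<dots> = c j0" using uj0 r'pos by (simp add: y_def)
    finally show ?thesis by (simp add: d_def)
  qed
  have e: "P' \<le> exp 1 * r' * U'"
  proof -
    have "P' = (\<Sum>i\<in>S. u i * r' * Qln (y i))" by (simp add: P'_def tpl_def y_def)
    also have "\<dots> \<le> (\<Sum>i\<in>S. u i * r' * (exp 1 * ln_rule (y i)))"
      using uc r'pos y0 by (intro sum_mono mult_left_mono Qln_le_e_ln) auto
    also have "\<dots> = exp 1 * r' * U'" by (simp add: U'_def sum_distrib_left algebra_simps)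
    finally show ?thesis .
  qed
  have f: "(1 - 1/exp 1) * (\<Sum>i\<in>S. u i * \<alpha> i) \<le> U' + ((\<Sum>i\<in>S. c i * \<alpha> i) - P') / (exp 1 * r')"
    if fa: "feas S c B \<alpha>" for \<alpha>
  proof -
    have "(\<Sum>i\<in>S. u i * ((1 - 1/exp 1) * \<alpha> i + (Qln (y i) - y i * \<alpha> i) / exp 1)) \<le> U'"
      unfolding U'_def using fa uc y0 by (intro sum_mono mult_left_mono dual_ln) (auto simp: feas_def)
    moreover have "\<And>i. i \<in> S \<Longrightarrow> u i * ((1 - 1/exp 1) * \<alpha> i + (Qln (y i) - y i * \<alpha> i) / exp 1)
        = (1 - 1/exp 1) * (u i * \<alpha> i) + (u i * r' * Qln (y i) - c i * \<alpha> i) / (exp 1 * r')"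
    proof -
      fix i assume "i \<in> S"
      then have ui: "0 < u i" using uc by auto
      then have "u i * y i = c i / r'" using r'pos by (simp add: y_def)
      then show "u i * ((1 - 1/exp 1) * \<alpha> i + (Qln (y i) - y i * \<alpha> i) / exp 1)
        = (1 - 1/exp 1) * (u i * \<alpha> i) + (u i * r' * Qln (y i) - c i * \<alpha> i) / (exp 1 * r')"
        using r'pos ui by (simp add: field_simps)
    qed
    ultimately have "(\<Sum>i\<in>S. (1 - 1/exp 1) * (u i * \<alpha> i) + (u i * r' * Qln (y i) - c i * \<alpha> i) / (exp 1 * r')) \<le> U'"
      by (metis (no_types, lifting) sum.cong)
    moreover have "(\<Sum>i\<in>S. (1 - 1/exp 1) * (u i * \<alpha> i) + (u i * r' * Qln (y i) - c i * \<alpha> i) / (exp 1 * r'))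
       = (1 - 1/exp 1) * (\<Sum>i\<in>S. u i * \<alpha> i) + (P' - (\<Sum>i\<in>S. c i * \<alpha> i)) / (exp 1 * r')"
    proof -
      have "(\<Sum>i\<in>S. (u i * r' * Qln (y i) - c i * \<alpha> i) / (exp 1 * r'))
          = (\<Sum>i\<in>S. (u i * r' * Qln (y i) - c i * \<alpha> i)) / (exp 1 * r')"
        by (rule sum_divide_distrib[symmetric])
      also have "\<dots> = (P' - (\<Sum>i\<in>S. c i * \<alpha> i)) / (exp 1 * r')"
        by (simp add: sum_subtractf P'_def tpl_def y_def)
      finally show ?thesis by (simp add: sum.distrib sum_distrib_left)
    qed
    ultimately have "(1 - 1/exp 1) * (\<Sum>i\<in>S. u i * \<alpha> i) + (P' - (\<Sum>i\<in>S. c i * \<alpha> i)) / (exp 1 * r') \<le> U'"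
      by linarith
    then show ?thesis by (simp add: diff_divide_distrib)
  qed
  define \<beta> :: real where "\<beta> = 1 - 1/exp 1"
  have beta: "0 < \<beta>" by (simp add: \<beta>_def)
  have U'pos: "0 \<le> U'" using e bc d0 d1 cmax th B r'pos
  proof -
    have "(1 - \<theta>) * B \<le> P'" using bc d1 cmax by (simp add: algebra_simps)
    moreover have "0 < (1 - \<theta>) * B" using th B by simp
    ultimately have "0 < exp 1 * r' * U'" using e by linarith
    moreover have "0 < exp 1 * r'" using r'pos by simp
    ultimately show ?thesis by (smt (verit) mult_nonpos_nonneg mult.commute)
  qed
  have key: "\<beta> * (\<Sum>i\<in>S. u i * \<alpha> i) \<le> U' / (1 - \<theta>)" if fa: "feas S c B \<alpha>" for \<alpha>
  proof -
    have s1: "(\<Sum>i\<in>S. c i * \<alpha> i) - P' \<le> \<theta> * B" using fa bc d1 cmax by (simp add: feas_def)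
    have "(1 - \<theta>) * B \<le> exp 1 * r' * U'" using bc d1 cmax e by (simp add: algebra_simps)
    then have "\<theta> * ((1 - \<theta>) * B) \<le> \<theta> * (exp 1 * r' * U')" by (rule mult_left_mono[OF _ th0])
    then have s2': "(\<theta> * B) * (1 - \<theta>) \<le> (\<theta> * U') * (exp 1 * r')" by (simp add: algebra_simps)
    have k: "0 < exp 1 * r'" using r'pos by simp
    have k2: "0 < 1 - \<theta>" using th by simp
    have s2: "\<theta> * B / (exp 1 * r') \<le> \<theta> * U' / (1 - \<theta>)"
      using s2' k k2 by (simp add: divide_le_eq le_divide_eq mult.commute mult.left_commute)
    have s3: "((\<Sum>i\<in>S. c i * \<alpha> i) - P') / (exp 1 * r') \<le> \<theta> * B / (exp 1 * r')"
      using s1 k by (intro divide_right_mono) auto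
    have "\<beta> * (\<Sum>i\<in>S. u i * \<alpha> i) \<le> U' + \<theta> * B / (exp 1 * r')"
      using f[OF fa] s3 unfolding \<beta>_def by linarith
    also have "\<dots> \<le> U' + \<theta> * U' / (1 - \<theta>)" using s2 by simp
    also have "\<dots> = U' / (1 - \<theta>)" using th by (simp add: field_simps)
    finally show ?thesis .
  qed
  have opt: "opt_util S u c B \<le> U' / (\<beta> * (1 - \<theta>))"
  proof (rule opt_le)
    fix \<alpha> assume "feas S c B \<alpha>"
    from key[OF this] show "(\<Sum>i\<in>S. u i * \<alpha> i) \<le> U' / (\<beta> * (1 - \<theta>))"
      using beta th by (simp add: field_simps mult.commute)
  qed (use B in simp)
  have op: "0 < opt_util S u c B" by (rule opt_pos[OF v])
  have "\<beta> * (1 - \<theta>) * opt_util S u c B \<le> U'"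
    using opt beta th by (simp add: field_simps)
  then have "\<beta> * (1 - \<theta>) * opt_util S u c B \<le> UT" using a by simp
  then show ?thesis using op unfolding UT_def \<beta>_def by (simp add: field_simps)
qed

lemma worst_ln_lower:
  assumes "0 < \<theta>" "\<theta> < 1"
  shows "(1 - 1/exp 1) * (1 - \<theta>) \<le> worst_ratio ln_rule \<theta>"
  unfolding worst_Wset
proof (rule cInf_greatest)
  show "Wset ln_rule \<theta> \<noteq> {}" using zero_inst[OF std_ln, of \<theta>] assms by auto
  fix x assume "x \<in> Wset ln_rule \<theta>"
  then show "(1 - 1/exp 1) * (1 - \<theta>) \<le> x" unfolding Wset_def using ln_lower assms by auto
qed




lemma two_sum:
  fixes F :: "real \<Rightarrow> real"
  assumes N: "0 < N"
  shows "(\<Sum>i<2*N. ((if i < N then p1 else p2) / real N) * F (if i < N then y1 else y2)) = p1 * F y1 + p2 * F y2"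
proof -
  let ?f = "\<lambda>i. ((if i < N then p1 else p2) / real N) * F (if i < N then y1 else y2)"
  have "(\<Sum>i<2*N. ?f i) = sum ?f {0..<2*N}" by (simp add: lessThan_atLeast0)
  also have "\<dots> = sum ?f {0..<N} + sum ?f {N..<2*N}"
    by (rule sum.atLeastLessThan_concat[symmetric]) auto
  also have "sum ?f {0..<N} = (\<Sum>i\<in>{0..<N}. (p1 / real N) * F y1)" by (intro sum.cong) auto
  also have "\<dots> = p1 * F y1" using N by simp
  also have "sum ?f {N..<2*N} = (\<Sum>i\<in>{N..<2*N}. (p2 / real N) * F y2)" by (intro sum.cong) auto
  also have "\<dots> = p2 * F y2" using N by simp
  finally show ?thesis .
qed

lemma two_atom:
  assumes g: "standard_alloc g" and th: "0 < \<theta>0" and wr: "b < worst_ratio g \<theta>0"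
    and y: "0 \<le> y1" "0 \<le> y2" and p: "0 < p1" "0 < p2"
    and bal: "p1 * y1 + p2 * y2 \<le> p1 * Qr g 1 y1 + p2 * Qr g 1 y2"
    and pos: "0 < p1 * Qr g 1 y1 + p2 * Qr g 1 y2"
  shows "b * (p1 + p2) \<le> p1 * g y1 + p2 * g y2"
proof (rule ccontr)
  define X where "X = p1 * g y1 + p2 * g y2"
  assume "\<not> b * (p1 + p2) \<le> p1 * g y1 + p2 * g y2"
  then have Xb: "X < b * (p1 + p2)" by (simp add: X_def)
  have X0: "0 \<le> X" unfolding X_def using p y std_nn[OF g] by (intro add_nonneg_nonneg mult_nonneg_nonneg) auto
  have bp: "0 < b * (p1 + p2)" using X0 Xb by linarith
  define \<eta> where "\<eta> = (b * (p1 + p2) - X) / (2 * (b * (p1 + p2)))"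
  have eta: "0 < \<eta>" "\<eta> < 1" using bp Xb X0 by (auto simp: \<eta>_def field_simps)
  have etaX: "X < b * ((1 - \<eta>) * (p1 + p2))"
  proof -
    have "b * ((1 - \<eta>) * (p1 + p2)) = b * (p1 + p2) - (b * (p1 + p2) - X) / 2"
      using bp by (simp add: \<eta>_def field_simps)
    moreover have "X < b * (p1 + p2) - (b * (p1 + p2) - X) / 2" using Xb by (simp add: field_simps)
    ultimately show ?thesis by simp
  qed
  define P1 where "P1 = p1 * Qr g 1 y1 + p2 * Qr g 1 y2"
  define B where "B = (1 - \<eta>) * P1"
  have B: "0 < B" using pos eta by (simp add: B_def P1_def)
  define K where "K = p1 * y1 + p2 * y2"
  have K0: "0 \<le> K" using p y by (simp add: K_def)
  define N where "N = nat (ceiling (K / (\<theta>0 * B))) + 1"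
  have N: "0 < N" by (simp add: N_def)
  have NK: "K / real N \<le> \<theta>0 * B"
  proof -
    have "K / (\<theta>0 * B) \<le> real N" unfolding N_def by linarith
    then have "K \<le> real N * (\<theta>0 * B)" using th B by (simp add: divide_le_eq)
    then show ?thesis using N by (simp add: divide_le_eq mult.commute)
  qed
  define pp where "pp i = (if i < N then p1 else p2)" for i
  define yy where "yy i = (if i < N then y1 else y2)" for i
  define S where "S = {..<2*N}"
  define u where "u i = pp i / real N" for i
  define c where "c i = u i * yy i" for i
  have ppos: "\<And>i. 0 < pp i" using p by (simp add: pp_def)
  have yy0: "\<And>i. 0 \<le> yy i" using y by (simp add: yy_def)
  have upos: "\<And>i. 0 < u i" using ppos N by (simp add: u_def)
  have c0: "\<And>i. 0 \<le> c i" unfolding c_def using upos yy0 by (meson less_imp_le mult_nonneg_nonneg)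
  have cu: "\<And>i. c i / u i = yy i" unfolding c_def using upos by (metis less_irrefl nonzero_mult_div_cancel_left)
  have sumF: "\<And>F. (\<Sum>i\<in>S. u i * F (yy i)) = p1 * F y1 + p2 * F y2"
    unfolding S_def u_def pp_def yy_def using two_sum[OF N] by simp
  have finS: "finite S" by (simp add: S_def)
  have "0 \<in> S" using N by (simp add: S_def)
  then have neS: "S \<noteq> {}" by blast
  have v: "valid_instance S u c B" using finS neS B upos c0 by (simp add: valid_instance_def)
  have uc: "\<forall>i\<in>S. 0 < u i \<and> 0 \<le> c i" using upos c0 by simp
  have tp1: "total_pay g S u c 1 = P1"
  proof -
    have "total_pay g S u c 1 = (\<Sum>i\<in>S. u i * Qr g 1 (yy i))"
      unfolding total_pay_def Pay_def by (simp add: cu)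
    then show ?thesis using sumF[of "Qr g 1"] by (simp add: P1_def)
  qed
  have PB: "B < P1" using pos eta by (simp add: B_def P1_def)
  have rate: "0 < stop_rate g S u (c(i:=0)) B \<and> stop_rate g S u (c(i:=0)) B \<le> 1" for i
  proof -
    have uc': "\<forall>j\<in>S. 0 < u j \<and> 0 \<le> (c(i:=0)) j" using upos c0 by simp
    have big: "B < total_pay g S u (c(i:=0)) r" if r: "1 \<le> r" for r
    proof -
      have "total_pay g S u c 1 \<le> total_pay g S u (c(i:=0)) r"
        unfolding total_pay_def
      proof (rule sum_mono)
        fix j assume "j \<in> S"
        have "Pay g 1 (u j) (c j) \<le> Pay g r (u j) (c j)" by (rule Pay_mono_r[OF g r upos c0])
        moreover have "Pay g r (u j) (c j) \<le> Pay g r (u j) ((c(i:=0)) j)"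
          using Pay_anti[OF g _ upos c0, of r j] r by auto
        ultimately show "Pay g 1 (u j) (c j) \<le> Pay g r (u j) ((c(i:=0)) j)" by simp
      qed
      then show ?thesis using tp1 PB by simp
    qed
    show ?thesis by (intro conjI stop_rate_pos[OF g uc' B] stop_rate_le1[OF g uc' B big])
  qed
  have UT: "truthful_util g S u c B \<le> X"
  proof -
    have "truthful_util g S u c B \<le> (\<Sum>i\<in>S. u i * g (yy i))"
      unfolding truthful_util_def truthful_alloc_def scaled_def
    proof (intro sum_mono mult_left_mono)
      fix i
      have r: "0 < stop_rate g S u (c(i := 0)) B" "stop_rate g S u (c(i := 0)) B \<le> 1" using rate by auto
      have "yy i \<le> yy i / stop_rate g S u (c(i := 0)) B"
        using r yy0[of i] by (simp add: le_divide_eq mult_left_le)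
      then show "g (c i / u i / stop_rate g S u (c(i := 0)) B) \<le> g (yy i)"
        using std_anti[OF g yy0] by (simp add: cu)
      show "0 \<le> u i" using upos[of i] by simp
    qed
    then show ?thesis using sumF[of g] by (simp add: X_def)
  qed
  have OPT: "(1 - \<eta>) * (p1 + p2) \<le> opt_util S u c B"
  proof -
    have cs: "(\<Sum>i\<in>S. c i * (1 - \<eta>)) = (1 - \<eta>) * K"
    proof -
      have "(\<Sum>i\<in>S. c i * (1 - \<eta>)) = (\<Sum>i\<in>S. u i * ((\<lambda>t. (1 - \<eta>) * t) (yy i)))"
        by (simp add: c_def mult.commute mult.left_commute)
      then show ?thesis using sumF[of "\<lambda>t. (1 - \<eta>) * t"] by (simp add: K_def algebra_simps)
    qed
    have "feas S c B (\<lambda>_. 1 - \<eta>)"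
      using eta cs bal unfolding feas_def B_def P1_def K_def by (simp add: mult_left_mono)
    from opt_ge[OF v this] have "(\<Sum>i\<in>S. u i * (1 - \<eta>)) \<le> opt_util S u c B" .
    moreover have "(\<Sum>i\<in>S. u i * (1 - \<eta>)) = (1 - \<eta>) * (p1 + p2)"
      using sumF[of "\<lambda>_. 1 - \<eta>"] by (simp add: algebra_simps)
    ultimately show ?thesis by simp
  qed
  have larg: "largeness S c B \<le> \<theta>0"
  proof -
    have "\<And>i. i \<in> S \<Longrightarrow> c i \<le> K / real N"
    proof -
      fix i
      have "c i = pp i * yy i / real N" by (simp add: c_def u_def)
      moreover have "pp i * yy i \<le> K" using p y by (auto simp: pp_def yy_def K_def)
      ultimately show "c i \<le> K / real N" using N by (simp add: divide_right_mono)
    qed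
    then have "Max (c ` S) \<le> K / real N" using finS neS by simp
    then have "Max (c ` S) \<le> \<theta>0 * B" using NK by simp
    then show ?thesis using B by (simp add: largeness_def divide_le_eq)
  qed
  have "worst_ratio g \<theta>0 \<le> truthful_util g S u c B / opt_util S u c B"
    by (rule worst_le_elem[OF g v larg])
  also have "\<dots> \<le> X / ((1 - \<eta>) * (p1 + p2))"
  proof -
    have op: "0 < (1 - \<eta>) * (p1 + p2)" using eta p by simp
    have "truthful_util g S u c B / opt_util S u c B \<le> truthful_util g S u c B / ((1 - \<eta>) * (p1 + p2))"
      using truthful_util_nonneg[OF g v] OPT op by (intro divide_left_mono) auto
    also have "\<dots> \<le> X / ((1 - \<eta>) * (p1 + p2))" using UT op by (intro divide_right_mono) auto
    finally show ?thesis .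
  qed
  also have "\<dots> < b"
    using etaX eta p by (simp add: divide_less_eq mult.commute)
  finally show False using wr by simp
qed




lemma step_ineq:
  fixes Gs Gt gs A h \<kappa> aS aT b s :: real
  assumes aS: "0 < aS" and aT: "aT = aS + \<kappa> * h" and k: "0 < \<kappa>" and h: "0 < h"
    and asd: "aS = 1 - \<kappa> * s" and kA: "\<kappa> * A = 1 - b"
    and G: "Gs + h * gs \<le> Gt" and star: "b - \<kappa> * s + \<kappa> * Gs \<le> gs * aS"
  shows "((Gs - A) / aS - ln aS / \<kappa>) - ((Gt - A) / aT - ln aT / \<kappa>) \<le> h / aS - h / aT"
proof -
  define W where "W = Gs - A"
  have atp: "0 < aT" using aT aS k h by (simp add: add_pos_pos)
  have bk: "b - \<kappa> * s = aS - \<kappa> * A" using asd kA by simp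
  have "aS + \<kappa> * W \<le> gs * aS" using star unfolding W_def bk by (simp add: algebra_simps)
  then have "h * (aS + \<kappa> * W) \<le> h * (gs * aS)" using h by (intro mult_left_mono) auto
  then have "h * (aS + \<kappa> * W) / aS \<le> h * gs" using aS by (simp add: divide_le_eq mult.assoc)
  then have hg: "h + h * \<kappa> * W / aS \<le> h * gs" using aS by (simp add: field_simps)
  have "W * aT / aS + h \<le> Gt - A"
  proof -
    have "W * aT / aS = W + h * \<kappa> * W / aS" using aS aT by (simp add: field_simps)
    then show ?thesis using hg G unfolding W_def by linarith
  qed
  then have "(W * aT / aS + h) / aT \<le> (Gt - A) / aT" using atp by (simp add: divide_right_mono)
  then have gt: "W / aS + h / aT \<le> (Gt - A) / aT" using atp aS by (simp add: field_simps)
  have "ln aT - ln aS = ln (aT / aS)" using atp aS by (simp add: ln_div)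
  also have "\<dots> \<le> aT / aS - 1" using atp aS by (intro ln_le_minus_one) simp
  also have "\<dots> = \<kappa> * h / aS" using aS aT by (simp add: field_simps)
  finally have "(ln aT - ln aS) / \<kappa> \<le> h / aS" using k by (simp add: divide_le_eq field_simps)
  then show ?thesis using gt unfolding W_def by (simp add: diff_divide_distrib)
qed

lemma grid:
  fixes G g :: "real \<Rightarrow> real" and \<kappa> A b y0 :: real
  assumes k: "0 < \<kappa>" and kA: "\<kappa> * A = 1 - b" and y0: "0 < y0" "\<kappa> * y0 < 1"
    and Gs: "\<And>t s. 0 \<le> t \<Longrightarrow> t \<le> s \<Longrightarrow> G s + (s - t) * g s \<le> G t"
    and star: "\<And>s. 0 \<le> s \<Longrightarrow> b - \<kappa> * s + \<kappa> * G s \<le> g s * (1 - \<kappa> * s)"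
    and n: "0 < n"
  defines "\<Phi> \<equiv> \<lambda>y. (G y - A) / (1 - \<kappa> * y) - ln (1 - \<kappa> * y) / \<kappa>"
  shows "\<Phi> y0 \<le> \<Phi> 0 + (y0 / real n) * (1 / (1 - \<kappa> * y0) - 1)"
proof -
  define h where "h = y0 / real n"
  have h: "0 < h" using y0 n by (simp add: h_def)
  have apos: "0 < 1 - \<kappa> * y" if "0 \<le> y" "y \<le> y0" for y
  proof -
    have "\<kappa> * y \<le> \<kappa> * y0" using that k by (intro mult_left_mono) auto
    then show ?thesis using y0 by simp
  qed
  have ind: "k \<le> n \<Longrightarrow> \<Phi> (real k * h) \<le> \<Phi> 0 + h * (1 / (1 - \<kappa> * (real k * h)) - 1)" for k
  proof (induction k)
    case 0 then show ?case by simp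
  next
    case (Suc k)
    define t where "t = real k * h"
    define s where "s = real (Suc k) * h"
    have st: "s = t + h" by (simp add: s_def t_def algebra_simps)
    have t0: "0 \<le> t" using h by (simp add: t_def)
    have sy: "s \<le> y0"
    proof -
      have "real (Suc k) \<le> real n" using Suc.prems by simp
      then have "real (Suc k) * h \<le> real n * h" using h by (intro mult_right_mono) auto
      then show ?thesis using n by (simp add: s_def h_def)
    qed
    have s0: "0 \<le> s" using t0 st h by simp
    have aS: "0 < 1 - \<kappa> * s" using apos[OF s0 sy] .
    have IH: "\<Phi> t \<le> \<Phi> 0 + h * (1 / (1 - \<kappa> * t) - 1)" using Suc by (simp add: t_def)
    have step: "\<Phi> s - \<Phi> t \<le> h / (1 - \<kappa> * s) - h / (1 - \<kappa> * t)"
    proof -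
      have "((G s - A) / (1 - \<kappa> * s) - ln (1 - \<kappa> * s) / \<kappa>) - ((G t - A) / (1 - \<kappa> * t) - ln (1 - \<kappa> * t) / \<kappa>)
            \<le> h / (1 - \<kappa> * s) - h / (1 - \<kappa> * t)"
      proof (rule step_ineq[OF aS _ k h refl kA _ star[OF s0]])
        show "1 - \<kappa> * t = 1 - \<kappa> * s + \<kappa> * h" using st by (simp add: algebra_simps)
        show "G s + h * g s \<le> G t" using Gs[OF t0, of s] st h by (simp add: mult.commute)
      qed
      then show ?thesis by (simp add: \<Phi>_def)
    qed
    have "\<Phi> s \<le> \<Phi> 0 + h * (1 / (1 - \<kappa> * s) - 1)"
      using IH step by (simp add: algebra_simps)
    then show ?case by (simp add: s_def)
  qed
  have "\<Phi> (real n * h) \<le> \<Phi> 0 + h * (1 / (1 - \<kappa> * (real n * h)) - 1)" by (rule ind) simp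
  moreover have "real n * h = y0" using n by (simp add: h_def)
  ultimately show ?thesis by (simp add: h_def)
qed




lemma frac_le_helper:
  fixes x y w z :: real
  assumes "0 < y" "0 < z" "x * z \<le> w * y"
  shows "x / y \<le> w / z"
  using assms by (simp add: divide_le_eq le_divide_eq field_simps)

lemma hard:
  assumes g: "standard_alloc g"
  shows "Sup (worst_ratio g ` {0<..}) \<le> 1 - 1 / exp 1"
proof (rule ccontr)
  define \<beta> :: real where "\<beta> = 1 - 1 / exp 1"
  define L where "L = Sup (worst_ratio g ` {0<..})"
  assume "\<not> Sup (worst_ratio g ` {0<..}) \<le> 1 - 1 / exp 1"
  then have Lb: "\<beta> < L" by (simp add: L_def \<beta>_def)
  define b where "b = (\<beta> + L) / 2"
  have b: "\<beta> < b" "b < L" using Lb by (auto simp: b_def)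
  have beta0: "0 < \<beta>" by (simp add: \<beta>_def)
  have b0: "0 < b" using b beta0 by simp
  have ne: "worst_ratio g ` {0<..} \<noteq> {}" by auto
  have bdd: "bdd_above (worst_ratio g ` {0<..})"
    by (rule bdd_aboveI[of _ 1]) (use worst_le1[OF g] in auto)
  obtain \<theta>0 where th0: "0 < \<theta>0" "b < worst_ratio g \<theta>0"
    using b(2) less_cSup_iff[OF ne bdd] unfolding L_def by auto
  have b1: "b \<le> 1" using th0 worst_le1[OF g, of \<theta>0] by simp
  define G where "G y = integral {y..} (scaled g 1)" for y
  define Q where "Q y = Qr g 1 y" for y
  have Qeq: "\<And>y. Q y = y * g y + G y" by (simp add: Q_def G_def Qr_unfold)
  have adm1: "adm (scaled g 1) ((exp 1 - 1) * 1)" by (rule adm_scaled[OF g]) simp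
  have Gnn: "\<And>y. 0 \<le> y \<Longrightarrow> 0 \<le> G y" unfolding G_def by (rule adm_int_nonneg[OF adm1])
  have Gsp: "\<And>t s. 0 \<le> t \<Longrightarrow> t \<le> s \<Longrightarrow> G s + (s - t) * g s \<le> G t"
    using adm_int_split[OF adm1] unfolding G_def scaled_def by (simp add: add.commute)
  have Qnn: "\<And>y. 0 \<le> y \<Longrightarrow> 0 \<le> Q y" unfolding Q_def by (rule Qr_nonneg[OF g]) auto
  have ge: "g (exp 1 - 1) = 0" using g by (simp add: standard_alloc_def)
  have Ge: "G (exp 1 - 1) = 0"
  proof -
    have "0 \<le> exp (1::real) - 1" by simp
    from adm_int_eq(2)[OF adm1 this] show ?thesis by (simp add: G_def)
  qed
  have Qe: "Q (exp 1 - 1) = 0" using Qeq ge Ge by simp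
  define G0 where "G0 = G 0"
  have Q0: "Q 0 = G0" using Qeq by (simp add: G0_def)
  have G00: "0 \<le> G0" using Gnn by (simp add: G0_def)
  show False
  proof (cases "G0 = 0")
    case True
    have gz: "g y = 0" if "0 < y" for y
    proof -
      have "G y + (y - 0) * g y \<le> G 0" using Gsp[of 0 y] that by simp
      then have "y * g y \<le> 0" using Gnn[of y] that True by (simp add: G0_def)
      moreover have "0 \<le> g y" using std_nn[OF g] that by simp
      ultimately show ?thesis using that by (simp add: mult_le_0_iff)
    qed
    let ?S = "{0::nat}" and ?u = "\<lambda>_::nat. 1::real" and ?c = "\<lambda>_::nat. \<theta>0" and ?B = "1::real"
    have v: "valid_instance ?S ?u ?c ?B" using th0 by (simp add: valid_instance_def)
    have l: "largeness ?S ?c ?B \<le> \<theta>0" by (simp add: largeness_def)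
    have r: "0 < stop_rate g ?S ?u (?c(0 := 0)) ?B"
      by (rule stop_rate_pos[OF g]) (use th0 in auto)
    have tu: "truthful_util g ?S ?u ?c ?B = 0"
      using gz[of "\<theta>0 / stop_rate g ?S ?u (?c(0 := 0)) ?B"] r th0
      by (simp add: truthful_util_def truthful_alloc_def scaled_def)
    have "worst_ratio g \<theta>0 \<le> 0" using worst_le_elem[OF g v l] tu by simp
    then show False using th0 b0 by simp
  next
    case False
    then have G0p: "0 < G0" using G00 by simp
    define D where "D y = y - Q y" for y
    have D0: "D 0 = - G0" by (simp add: D_def Q0)
    have Dpos_y: "0 < y" if "0 \<le> y" "0 < D y" for y
      using Qnn[OF that(1)] that(2) unfolding D_def by linarith
    have TA: "b * (p1 + p2) \<le> p1 * g y1 + p2 * g y2"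
      if "0 \<le> y1" "0 \<le> y2" "0 < p1" "0 < p2" "p1 * y1 + p2 * y2 \<le> p1 * Q y1 + p2 * Q y2"
         "0 < p1 * Q y1 + p2 * Q y2" for y1 y2 p1 p2
      using two_atom[OF g th0(1) th0(2)] that unfolding Q_def by blast
    have KA: "(b - g y) / D y \<le> (1 - b) / G0" if y: "0 \<le> y" "0 < D y" for y
    proof -
      have yp: "0 < y" using Dpos_y y by blast
      have "b * (D y + G0) \<le> D y * g 0 + G0 * g y"
      proof (rule TA)
        show "D y * 0 + G0 * y \<le> D y * Q 0 + G0 * Q y" by (simp add: Q0 D_def algebra_simps)
        show "0 < D y * Q 0 + G0 * Q y" using G0p yp by (simp add: Q0 D_def algebra_simps)
      qed (use y G0p in auto)
      then have "(b - g y) * G0 \<le> (1 - b) * D y" using std_0[OF g] by (simp add: algebra_simps)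
      then show ?thesis using y G0p by (simp add: divide_le_eq le_divide_eq mult.commute)
    qed
    define K where "K = {(b - g y) / D y | y. 0 \<le> y \<and> 0 < D y}"
    have De: "D (exp 1 - 1) = exp 1 - 1" by (simp add: D_def Qe)
    have e1: "1 < exp (1::real)" by simp
    have Kin: "b / (exp 1 - 1) \<in> K"
    proof -
      have "0 \<le> exp (1::real) - 1" "0 < D (exp 1 - 1)" using De e1 by auto
      moreover have "b / (exp 1 - 1) = (b - g (exp 1 - 1)) / D (exp 1 - 1)" using De ge by simp
      ultimately show ?thesis unfolding K_def by blast
    qed
    have Kne: "K \<noteq> {}" using Kin by blast
    have Kbdd: "bdd_above K" unfolding K_def by (rule bdd_aboveI[of _ "(1 - b) / G0"]) (use KA in auto)
    define \<kappa> where "\<kappa> = Sup K"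
    have kge: "b / (exp 1 - 1) \<le> \<kappa>" unfolding \<kappa>_def by (rule cSup_upper[OF Kin Kbdd])
    have kpos: "0 < \<kappa>" using kge b0 e1 by (smt (verit) divide_pos_pos)
    have starD: "b - \<kappa> * D s \<le> g s" if s: "0 \<le> s" for s
    proof (cases "D s" "0::real" rule: linorder_cases)
      case greater
      have "(b - g s) / D s \<in> K" unfolding K_def using s greater by blast
      then have "(b - g s) / D s \<le> \<kappa>" unfolding \<kappa>_def by (rule cSup_upper[OF _ Kbdd])
      then show ?thesis using greater by (simp add: divide_le_eq mult.commute)
    next
      case less
      have "\<kappa> \<le> (g s - b) / (- D s)" unfolding \<kappa>_def
      proof (rule cSup_least[OF Kne])
        fix x assume "x \<in> K"
        then obtain z where z: "0 \<le> z" "0 < D z" "x = (b - g z) / D z" unfolding K_def by blast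
        have zp: "0 < z" using Dpos_y z by blast
        have "b * (D z + - D s) \<le> D z * g s + - D s * g z"
        proof (rule TA)
          show "D z * s + - D s * z \<le> D z * Q s + - D s * Q z" by (simp add: D_def algebra_simps)
          have "0 \<le> D z * s" using z s by simp
          moreover have "0 < - D s * z" using less zp by (simp add: mult_neg_pos)
          moreover have "D z * Q s + - D s * Q z = D z * s + - D s * z" by (simp add: D_def algebra_simps)
          ultimately show "0 < D z * Q s + - D s * Q z" by linarith
        qed (use s z less in auto)
        then have "(b - g z) * (- D s) \<le> (g s - b) * D z" by (simp add: algebra_simps)
        then have "(b - g z) / D z \<le> (g s - b) / (- D s)" using z less by (intro frac_le_helper) auto
        then show "x \<le> (g s - b) / (- D s)" using z by simp
      qed
      then have "\<kappa> * (- D s) \<le> (g s - b) / (- D s) * (- D s)" using less by (intro mult_right_mono) auto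
      also have "\<dots> = g s - b" using less by simp
      finally have "\<kappa> * (- D s) \<le> g s - b" .
      then show ?thesis by simp
    next
      case equal
      have sp: "0 < s" using equal D0 G0p s by (cases "s = 0") auto
      have "b * (1 + 1) \<le> 1 * g s + 1 * g s"
      proof (rule TA)
        show "1 * s + 1 * s \<le> 1 * Q s + 1 * Q s" using equal by (simp add: D_def)
        show "0 < 1 * Q s + 1 * Q s" using equal sp by (simp add: D_def)
      qed (use s in auto)
      then show ?thesis using equal by simp
    qed
    have star: "b - \<kappa> * s + \<kappa> * G s \<le> g s * (1 - \<kappa> * s)" if "0 \<le> s" for s
      using starD[OF that] by (simp add: D_def Qeq algebra_simps)
    define A where "A = (1 - b) / \<kappa>"
    have kA: "\<kappa> * A = 1 - b" using kpos by (simp add: A_def)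
    define y0 where "y0 = \<beta> / \<kappa>"
    have y0: "0 < y0" "\<kappa> * y0 < 1" using kpos beta0 by (auto simp: y0_def \<beta>_def)
    have ay0: "1 - \<kappa> * y0 = 1 / exp 1" using kpos by (simp add: y0_def \<beta>_def)
    define \<Phi> where "\<Phi> = (\<lambda>y. (G y - A) / (1 - \<kappa> * y) - ln (1 - \<kappa> * y) / \<kappa>)"
    have P0: "\<Phi> 0 \<le> 0"
    proof -
      have "b - \<kappa> * 0 + \<kappa> * G 0 \<le> g 0 * (1 - \<kappa> * 0)" by (rule star) simp
      then have "\<kappa> * G0 \<le> \<kappa> * A" using std_0[OF g] kA by (simp add: G0_def)
      then have "G0 \<le> A" using kpos by simp
      then show ?thesis by (simp add: \<Phi>_def G0_def)
    qed
    define m where "m = 1 - exp 1 * (1 - b)"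
    have mpos: "0 < m"
    proof -
      have "m = exp 1 * (b - \<beta>)" by (simp add: m_def \<beta>_def field_simps)
      then show ?thesis using b by simp
    qed
    have Py0: "m / \<kappa> \<le> \<Phi> y0"
    proof -
      have "\<Phi> y0 = exp 1 * (G y0 - A) + 1 / \<kappa>" unfolding \<Phi>_def ay0 by (simp add: ln_div)
      moreover have "0 \<le> G y0" using Gnn y0 by simp
      then have "- (exp 1 * A) \<le> exp 1 * (G y0 - A)" by (simp add: algebra_simps)
      moreover have "m / \<kappa> = 1 / \<kappa> - exp 1 * A" using kpos by (simp add: m_def A_def field_simps)
      ultimately show ?thesis by linarith
    qed
    define n :: nat where "n = nat (ceiling (y0 * (exp 1 - 1) * \<kappa> / m)) + 1"
    have n: "0 < n" by (simp add: n_def)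
    have "\<Phi> y0 \<le> \<Phi> 0 + (y0 / real n) * (1 / (1 - \<kappa> * y0) - 1)"
      unfolding \<Phi>_def by (rule grid[OF kpos kA y0 Gsp star n])
    then have up: "\<Phi> y0 \<le> (y0 / real n) * (exp 1 - 1)" using P0 ay0 by simp
    have "y0 * (exp 1 - 1) * \<kappa> / m < real n" unfolding n_def by linarith
    then have "y0 * (exp 1 - 1) * \<kappa> < real n * m" using mpos by (simp add: divide_less_eq)
    then have "(y0 / real n) * (exp 1 - 1) < m / \<kappa>" using n kpos mpos
      by (simp add: field_simps mult.commute mult.left_commute)
    then show False using up Py0 by simp
  qed
qed




theorem theorem1:
  shows "standard_alloc ln_rule \<and> lm_ratio_is ln_rule (1 - 1 / exp 1) \<and>
         (\<forall>g. standard_alloc g \<longrightarrow> (\<exists>L. lm_ratio_is g L \<and> L \<le> 1 - 1 / exp 1))"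
proof (intro conjI allI impI)
  show "standard_alloc ln_rule" by (rule std_ln)
next
  fix g :: "real \<Rightarrow> real" assume g: "standard_alloc g"
  show "\<exists>L. lm_ratio_is g L \<and> L \<le> 1 - 1 / exp 1"
    using worst_limit(1)[OF g] hard[OF g] by blast
next
  define L where "L = Sup (worst_ratio ln_rule ` {0<..})"
  have lim: "lm_ratio_is ln_rule L" unfolding L_def by (rule worst_limit(1)[OF std_ln])
  have up: "L \<le> 1 - 1 / exp 1" unfolding L_def by (rule hard[OF std_ln])
  have "1 - 1 / exp 1 \<le> L"
  proof (rule tendsto_le[of "at_right (0::real)"])
    show "at_right (0::real) \<noteq> bot" by simp
    show "(worst_ratio ln_rule \<longlongrightarrow> L) (at_right 0)" using lim by (simp add: lm_ratio_is_def)
    show "((\<lambda>\<theta>. (1 - 1 / exp 1) * (1 - \<theta>)) \<longlongrightarrow> 1 - 1 / exp 1) (at_right (0::real))"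
    proof -
      have "((\<lambda>\<theta>::real. (1 - 1 / exp 1) * (1 - \<theta>)) \<longlongrightarrow> (1 - 1 / exp 1) * (1 - 0)) (at_right 0)"
        by (intro tendsto_intros)
      then show ?thesis by simp
    qed
    show "\<forall>\<^sub>F \<theta> in at_right 0. (1 - 1 / exp 1) * (1 - \<theta>) \<le> worst_ratio ln_rule \<theta>"
      unfolding eventually_at_right_field
      by (intro exI[of _ 1]) (auto intro: worst_ln_lower)
  qed
  with up have "L = 1 - 1 / exp 1" by simp
  with lim show "lm_ratio_is ln_rule (1 - 1 / exp 1)" by simp
qed


end
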